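(* Let $F$ be a finite rooted poset with root $\bot$ and height greater than $1$, such that $F$ validates $\mathbf{PL}_n$. Let $s,t$ be top (maximal) elements of $F$. Then there is a path $a_0a_1\cdots a_m$ with $a_0=s$, $a_m=t$, all $a_i\in{\uparrow^\circ\bot}$, such that for each $i$: ${\uparrow^\circ a_i}=\varnothing$ when $i$ is even, and ${\uparrow^\circ a_i}=\{a_{i-1},a_{i+1}\}$ when $i$ is odd.
   Context: For $x$ in a poset, ${\uparrow^\circ x}=\{y:y>x\}$. A path is a sequence $a_0\cdots a_m$ in which for each $i$ either $a_i<a_{i+1}$ or $a_i>a_{i+1}$. The height of a poset is the supremum of $|C|-1$ over chains $C$. A p-morphism $f$ satisfies $f(\uparrow x)=\uparrow f(x)$; an up-reduction of $F$ onto $G$ is a surjective p-morphism from an upset of $F$ onto $G$. For a finite rooted poset $Q$, $\chi(Q)$ is its Jankov–Fine formula: a frame validates $\chi(Q)$ iff it has no up-reduction onto $Q$. $\mathbf{BD}_n$ is the logic of all finite frames of height at most $n$. The 3-fork is $\{r,a,b,c\}$ with $r<a,r<b,r<c$ only; the Scott frame is $\{r,u_1,u_2,v\}$ with $r<u_1<u_2$, $r<v$ (and $r<u_2$) only. $\mathbf{PL}_n$ is the smallest intermediate logic containing $\mathbf{BD}_n$, $\chi(\text{3-fork})$ and $\chi(\text{Scott frame})$. *)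

theory Defs
  imports Main "HOL-Library.Extended_Nat"
begin

definition poset :: "'a set \<Rightarrow> ('a \<Rightarrow> 'a \<Rightarrow> bool) \<Rightarrow> bool" where
  "poset W R \<longleftrightarrow> (\<forall>x\<in>W. R x x)
     \<and> (\<forall>x\<in>W. \<forall>y\<in>W. R x y \<and> R y x \<longrightarrow> x = y)
     \<and> (\<forall>x\<in>W. \<forall>y\<in>W. \<forall>z\<in>W. R x y \<and> R y z \<longrightarrow> R x z)"

definition less_in :: "('a \<Rightarrow> 'a \<Rightarrow> bool) \<Rightarrow> 'a \<Rightarrow> 'a \<Rightarrow> bool" where
  "less_in R x y \<longleftrightarrow> R x y \<and> x \<noteq> y"

definition sup_set :: "'a set \<Rightarrow> ('a \<Rightarrow> 'a \<Rightarrow> bool) \<Rightarrow> 'a \<Rightarrow> 'a set" where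
  "sup_set W R x = {y\<in>W. less_in R x y}"

definition up_set :: "'a set \<Rightarrow> ('a \<Rightarrow> 'a \<Rightarrow> bool) \<Rightarrow> 'a \<Rightarrow> 'a set" where
  "up_set W R x = {y\<in>W. R x y}"

definition is_upset :: "'a set \<Rightarrow> ('a \<Rightarrow> 'a \<Rightarrow> bool) \<Rightarrow> 'a set \<Rightarrow> bool" where
  "is_upset W R U \<longleftrightarrow> U \<subseteq> W \<and> (\<forall>x\<in>U. \<forall>y\<in>W. R x y \<longrightarrow> y \<in> U)"

definition rooted_at :: "'a set \<Rightarrow> ('a \<Rightarrow> 'a \<Rightarrow> bool) \<Rightarrow> 'a \<Rightarrow> bool" where
  "rooted_at W R r \<longleftrightarrow> r \<in> W \<and> (\<forall>x\<in>W. R r x)"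

definition is_chain :: "'a set \<Rightarrow> ('a \<Rightarrow> 'a \<Rightarrow> bool) \<Rightarrow> 'a set \<Rightarrow> bool" where
  "is_chain W R C \<longleftrightarrow> C \<subseteq> W \<and> (\<forall>x\<in>C. \<forall>y\<in>C. R x y \<or> R y x)"

definition height :: "'a set \<Rightarrow> ('a \<Rightarrow> 'a \<Rightarrow> bool) \<Rightarrow> enat" where
  "height W R = Sup {enat (card C) - 1 | C. is_chain W R C \<and> finite C \<and> C \<noteq> {}}"

definition is_top :: "'a set \<Rightarrow> ('a \<Rightarrow> 'a \<Rightarrow> bool) \<Rightarrow> 'a \<Rightarrow> bool" where
  "is_top W R x \<longleftrightarrow> x \<in> W \<and> (\<forall>y\<in>W. R x y \<longrightarrow> y = x)"

definition p_morphism ::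
  "'a set \<Rightarrow> ('a \<Rightarrow> 'a \<Rightarrow> bool) \<Rightarrow> 'b set \<Rightarrow> ('b \<Rightarrow> 'b \<Rightarrow> bool) \<Rightarrow> ('a \<Rightarrow> 'b) \<Rightarrow> bool" where
  "p_morphism U R V S f \<longleftrightarrow> f ` U \<subseteq> V \<and> (\<forall>x\<in>U. f ` up_set U R x = up_set V S (f x))"

definition up_reduction ::
  "'a set \<Rightarrow> ('a \<Rightarrow> 'a \<Rightarrow> bool) \<Rightarrow> 'b set \<Rightarrow> ('b \<Rightarrow> 'b \<Rightarrow> bool) \<Rightarrow> ('a \<Rightarrow> 'b) \<Rightarrow> bool" where
  "up_reduction W R V S f \<longleftrightarrow> (\<exists>U. is_upset W R U \<and> p_morphism U R V S f \<and> f ` U = V)"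

definition has_up_reduction ::
  "'a set \<Rightarrow> ('a \<Rightarrow> 'a \<Rightarrow> bool) \<Rightarrow> 'b set \<Rightarrow> ('b \<Rightarrow> 'b \<Rightarrow> bool) \<Rightarrow> bool" where
  "has_up_reduction W R V S \<longleftrightarrow> (\<exists>f. up_reduction W R V S f)"

text \<open>3-fork: r = 0, a = 1, b = 2, c = 3\<close>
definition fork3_W :: "nat set" where "fork3_W = {0,1,2,3}"
definition fork3_R :: "nat \<Rightarrow> nat \<Rightarrow> bool" where
  "fork3_R x y \<longleftrightarrow> x = y \<or> x = 0"

text \<open>Scott frame: r = 0, u1 = 1, u2 = 2, v = 3\<close>
definition scott_W :: "nat set" where "scott_W = {0,1,2,3}"
definition scott_R :: "nat \<Rightarrow> nat \<Rightarrow> bool" where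
  "scott_R x y \<longleftrightarrow> x = y \<or> x = 0 \<or> (x = 1 \<and> y = 2)"

datatype fm = Var nat | Bot | And fm fm | Or fm fm | Imp fm fm

fun forces :: "'a set \<Rightarrow> ('a \<Rightarrow> 'a \<Rightarrow> bool) \<Rightarrow> (nat \<Rightarrow> 'a set) \<Rightarrow> 'a \<Rightarrow> fm \<Rightarrow> bool" where
  "forces W R V x (Var p) \<longleftrightarrow> x \<in> V p"
| "forces W R V x Bot \<longleftrightarrow> False"
| "forces W R V x (And a b) \<longleftrightarrow> forces W R V x a \<and> forces W R V x b"
| "forces W R V x (Or a b) \<longleftrightarrow> forces W R V x a \<or> forces W R V x b"
| "forces W R V x (Imp a b) \<longleftrightarrow>
     (\<forall>y\<in>W. R x y \<longrightarrow> forces W R V y a \<longrightarrow> forces W R V y b)"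

definition valid_in :: "'a set \<Rightarrow> ('a \<Rightarrow> 'a \<Rightarrow> bool) \<Rightarrow> fm \<Rightarrow> bool" where
  "valid_in W R \<phi> \<longleftrightarrow>
     (\<forall>V. (\<forall>p. is_upset W R (V p)) \<longrightarrow> (\<forall>x\<in>W. forces W R V x \<phi>))"

text \<open>BD_n: the logic of all finite frames of height at most n (finite frames are,
  up to isomorphism, frames on subsets of nat)\<close>
definition BD :: "nat \<Rightarrow> fm set" where
  "BD n = {\<phi>. \<forall>(W::nat set) R. finite W \<and> W \<noteq> {} \<and> poset W R \<and> height W R \<le> enat n
               \<longrightarrow> valid_in W R \<phi>}"

text \<open>A frame validates PL_n = the smallest intermediate logic containing BD_n,
  chi(3-fork) and chi(Scott frame).  Frame validity is closed under modus ponens and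
  substitution, so this is validity of BD_n together with chi(3-fork) and chi(Scott);
  a frame validates chi(Q) iff it has no up-reduction onto Q.\<close>
definition validates_PL :: "nat \<Rightarrow> 'a set \<Rightarrow> ('a \<Rightarrow> 'a \<Rightarrow> bool) \<Rightarrow> bool" where
  "validates_PL n W R \<longleftrightarrow> (\<forall>\<phi>\<in>BD n. valid_in W R \<phi>)
     \<and> \<not> has_up_reduction W R fork3_W fork3_R
     \<and> \<not> has_up_reduction W R scott_W scott_R"

end

theory Submission
  imports Defs
begin

lemma height_gt1: assumes "height W R > 1"
  shows "\<exists>C. is_chain W R C \<and> finite C \<and> card C \<ge> 3"
proof -
  from assms obtain x where "x \<in> {enat (card C) - 1 | C. is_chain W R C \<and> finite C \<and> C \<noteq> {}}" "1 < x"
    unfolding height_def by (auto simp: less_Sup_iff)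
  then obtain C where C: "is_chain W R C" "finite C" "1 < enat (card C) - 1" by auto
  then have "1 < card C - 1" by (simp add: one_enat_def idiff_enat_enat)
  then show ?thesis using C by (intro exI[of _ C]) auto
qed

lemma po_refl: "poset W R \<Longrightarrow> x \<in> W \<Longrightarrow> R x x" unfolding poset_def by blast
lemma po_anti: "poset W R \<Longrightarrow> x \<in> W \<Longrightarrow> y \<in> W \<Longrightarrow> R x y \<Longrightarrow> R y x \<Longrightarrow> x = y"
  unfolding poset_def by blast
lemma po_trans: "poset W R \<Longrightarrow> x \<in> W \<Longrightarrow> y \<in> W \<Longrightarrow> z \<in> W \<Longrightarrow> R x y \<Longrightarrow> R y z \<Longrightarrow> R x z"
  unfolding poset_def by blast

lemma top_above:
  assumes "finite W" "poset W R" "x \<in> W"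
  shows "\<exists>t. is_top W R t \<and> R x t"
proof -
  let ?P = "\<lambda>z. z \<in> W \<and> R x z"
  have "?P x" using assms po_refl by metis
  then obtain z where z: "?P z" and zmin: "\<And>z'. ?P z' \<Longrightarrow> card (up_set W R z) \<le> card (up_set W R z')"
    using ex_has_least_nat[of ?P x "\<lambda>z. card (up_set W R z)"] by blast
  have "is_top W R z"
    unfolding is_top_def
  proof (intro conjI ballI impI)
    show "z \<in> W" using z by auto
    fix y assume y: "y \<in> W" "R z y"
    show "y = z"
    proof (rule ccontr)
      assume ne: "y \<noteq> z"
      have sub: "up_set W R y \<subseteq> up_set W R z" using y z po_trans[OF assms(2)] unfolding up_set_def by blast
      have "z \<notin> up_set W R y" using y z ne po_anti[OF assms(2)] unfolding up_set_def by blast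
      moreover have "z \<in> up_set W R z" using z po_refl[OF assms(2)] unfolding up_set_def by blast
      ultimately have "up_set W R y \<subset> up_set W R z" using sub by blast
      then have "card (up_set W R y) < card (up_set W R z)"
        using assms(1) by (intro psubset_card_mono) (auto simp: up_set_def)
      moreover have "?P y" using y z po_trans[OF assms(2)] assms(3) by blast
      ultimately show False using zmin by fastforce
    qed
  qed
  then show ?thesis using z by blast
qed

lemma up_set_self:
  assumes po: "poset W R" and yW: "y \<in> W"
  shows "up_set W R y = insert y (sup_set W R y)"
  using po_refl[OF po yW] yW unfolding up_set_def sup_set_def less_in_def by auto

lemma up_set_upset:
  assumes po: "poset W R" and yW: "y \<in> W"
  shows "is_upset W R (up_set W R y)"
  unfolding is_upset_def up_set_def using po_trans[OF po] yW by blast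

lemma fork_red:
  assumes po: "poset W R" and yW: "y \<in> W"
    and tops: "\<forall>w\<in>sup_set W R y. is_top W R w"
    and abc: "a \<in> sup_set W R y" "b \<in> sup_set W R y" "c \<in> sup_set W R y"
    and d: "a \<noteq> b" "a \<noteq> c" "b \<noteq> c"
  shows "has_up_reduction W R fork3_W fork3_R"
proof -
  define f where "f w = (if w = y then 0 else if w = a then 1 else if w = b then 2 else (3::nat))" for w
  define U where "U = up_set W R y"
  have Ueq: "U = insert y (sup_set W R y)"
    using up_set_self[OF po yW] unfolding U_def .
  have ay: "a \<noteq> y" "b \<noteq> y" "c \<noteq> y" using abc unfolding sup_set_def less_in_def by auto
  have upU: "is_upset W R U"
    using up_set_upset[OF po yW] unfolding U_def .
  have img: "f ` U = fork3_W"
  proof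
    show "f ` U \<subseteq> fork3_W" unfolding f_def fork3_W_def by auto
    have "0 = f y" "1 = f a" "2 = f b" "3 = f c" using ay d unfolding f_def by auto
    then show "fork3_W \<subseteq> f ` U" unfolding fork3_W_def Ueq using abc by auto
  qed
  have pm: "p_morphism U R fork3_W fork3_R f"
    unfolding p_morphism_def
  proof (intro conjI ballI)
    show "f ` U \<subseteq> fork3_W" using img by simp
    fix x assume xU: "x \<in> U"
    show "f ` up_set U R x = up_set fork3_W fork3_R (f x)"
    proof (cases "x = y")
      case True
      have "up_set U R x = U" using True xU unfolding U_def up_set_def by auto
      then show ?thesis using img True unfolding f_def fork3_W_def fork3_R_def up_set_def by auto
    next
      case False
      then have xs: "x \<in> sup_set W R y" using xU Ueq by auto
      then have xt: "is_top W R x" using tops by auto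
      have "up_set U R x = {x}"
        using xt xU yW po_refl[OF po] Ueq unfolding up_set_def is_top_def sup_set_def by auto
      moreover have "f x \<noteq> 0" using False unfolding f_def by auto
      moreover have "f x \<in> fork3_W" using img xU by auto
      ultimately show ?thesis unfolding fork3_W_def fork3_R_def up_set_def by auto
    qed
  qed
  show ?thesis unfolding has_up_reduction_def up_reduction_def using upU pm img by blast
qed

lemma scott_red:
  assumes po: "poset W R" and yW: "y \<in> W"
    and XY: "X \<union> Y = sup_set W R y" "X \<inter> Y = {}"
    and cX: "\<forall>w\<in>X. \<forall>w'\<in>W. R w w' \<longrightarrow> w' \<in> X"
    and cY: "\<forall>w\<in>Y. \<forall>w'\<in>W. R w w' \<longrightarrow> w' \<in> Y"
    and tX: "\<forall>w\<in>X. \<exists>t\<in>X. is_top W R t \<and> R w t"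
    and z: "z \<in> X" "\<not> is_top W R z" and Yne: "Y \<noteq> {}"
  shows "has_up_reduction W R scott_W scott_R"
proof -
  define f where "f w = (if w = y then 0 else if w \<in> X then (if is_top W R w then 2 else 1) else (3::nat))" for w
  define U where "U = up_set W R y"
  have Ueq: "U = insert y (X \<union> Y)"
    using up_set_self[OF po yW] XY unfolding U_def by simp
  have yXY: "y \<notin> X" "y \<notin> Y" using XY unfolding sup_set_def less_in_def by auto
  have XW: "X \<subseteq> W" "Y \<subseteq> W" using XY unfolding sup_set_def by auto
  have upU: "is_upset W R U"
    using up_set_upset[OF po yW] unfolding U_def .
  obtain tz where tz: "tz \<in> X" "is_top W R tz" using tX z by blast
  obtain w3 where w3: "w3 \<in> Y" using Yne by blast
  have img: "f ` U = scott_W"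
  proof
    show "f ` U \<subseteq> scott_W" unfolding f_def scott_W_def by auto
    have "0 = f y" "1 = f z" "2 = f tz" "3 = f w3" using yXY z tz w3 XY unfolding f_def by auto
    then show "scott_W \<subseteq> f ` U" unfolding scott_W_def Ueq using z tz w3 by auto
  qed
  have pm: "p_morphism U R scott_W scott_R f"
    unfolding p_morphism_def
  proof (intro conjI ballI)
    show "f ` U \<subseteq> scott_W" using img by simp
    fix x assume xU: "x \<in> U"
    show "f ` up_set U R x = up_set scott_W scott_R (f x)"
    proof (cases "x = y")
      case True
      have "up_set U R x = U" using True xU unfolding U_def up_set_def by auto
      then show ?thesis using img True unfolding f_def scott_W_def scott_R_def up_set_def by auto
    next
      case False
      then have xXY: "x \<in> X \<union> Y" using xU Ueq by auto
      show ?thesis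
      proof (cases "x \<in> X")
        case xX: True
        have upx: "up_set U R x = {w \<in> X. R x w}"
          using xX cX XW Ueq yXY yW unfolding up_set_def by auto
        show ?thesis
        proof (cases "is_top W R x")
          case True
          have "up_set U R x = {x}"
            using True xX XW po_refl[OF po] upx unfolding is_top_def by auto
          then show ?thesis using True xX yXY unfolding f_def scott_W_def scott_R_def up_set_def by auto
        next
          case nt: False
          obtain tx where tx: "tx \<in> X" "is_top W R tx" "R x tx" using tX xX by blast
          have fx: "f x = 1" using nt xX yXY unfolding f_def by auto
          have "f ` up_set U R x \<subseteq> {1,2}" using upx yXY unfolding f_def by auto
          moreover have "x \<in> up_set U R x" using upx xX XW po_refl[OF po] by auto
          moreover have "tx \<in> up_set U R x" using upx tx by auto
          moreover have "f tx = 2" using tx yXY unfolding f_def by auto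
          ultimately have "f ` up_set U R x = {1,2}" using fx by force
          then show ?thesis using fx unfolding scott_W_def scott_R_def up_set_def by auto
        qed
      next
        case xY: False
        then have xY: "x \<in> Y" using xXY by auto
        have upx: "up_set U R x = {w \<in> Y. R x w}"
          using xY cY XW Ueq yXY yW unfolding up_set_def by auto
        have fx: "f x = 3" using xY XY yXY unfolding f_def by auto
        have "\<forall>w\<in>up_set U R x. f w = 3" using upx XY yXY unfolding f_def by auto
        moreover have "x \<in> up_set U R x" using upx xY XW po_refl[OF po] by auto
        ultimately have "f ` up_set U R x = {3}" by force
        then show ?thesis using fx unfolding scott_W_def scott_R_def up_set_def by auto
      qed
    qed
  qed
  show ?thesis unfolding has_up_reduction_def up_reduction_def using upU pm img by blast
qed

definition pathP :: "'a set \<Rightarrow> ('a \<Rightarrow> 'a \<Rightarrow> bool) \<Rightarrow> 'a \<Rightarrow> 'a \<Rightarrow> 'a \<Rightarrow> bool" where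
  "pathP W R rt s t \<longleftrightarrow> (\<exists>(a :: nat \<Rightarrow> 'a) m. a 0 = s \<and> a m = t
      \<and> (\<forall>i\<le>m. a i \<in> sup_set W R rt)
      \<and> (\<forall>i<m. less_in R (a i) (a (Suc i)) \<or> less_in R (a (Suc i)) (a i))
      \<and> (\<forall>i\<le>m. even i \<longrightarrow> sup_set W R (a i) = {})
      \<and> (\<forall>i\<le>m. odd i \<longrightarrow> sup_set W R (a i) = {a (i - 1), a (i + 1)}))"

lemma top_sup_empty: "is_top W R x \<Longrightarrow> sup_set W R x = {}"
  unfolding is_top_def sup_set_def less_in_def by auto

lemma path_base: "is_top W R s \<Longrightarrow> s \<in> sup_set W R rt \<Longrightarrow> pathP W R rt s s"
  unfolding pathP_def
  by (rule exI[of _ "\<lambda>_. s"], rule exI[of _ 0]) (auto simp: top_sup_empty)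

lemma path_ext:
  assumes p: "pathP W R rt s u" and ut: "is_top W R u" and u't: "is_top W R u'"
    and y: "y \<in> sup_set W R rt" and u': "u' \<in> sup_set W R rt"
    and sy: "sup_set W R y = {u, u'}"
  shows "pathP W R rt s u'"
proof -
  obtain a m where a: "a 0 = s" "a m = u"
      "\<forall>i\<le>m. a i \<in> sup_set W R rt"
      "\<forall>i<m. less_in R (a i) (a (Suc i)) \<or> less_in R (a (Suc i)) (a i)"
      "\<forall>i\<le>m. even i \<longrightarrow> sup_set W R (a i) = {}"
      "\<forall>i\<le>m. odd i \<longrightarrow> sup_set W R (a i) = {a (i - 1), a (i + 1)}"
    using p unfolding pathP_def by blast
  have em: "even m"
  proof (rule ccontr)
    assume "odd m"
    then have "sup_set W R (a m) \<noteq> {}" using a(6) by auto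
    then show False using a(2) ut top_sup_empty by metis
  qed
  have lu: "less_in R y u" "less_in R y u'" using sy unfolding sup_set_def by auto
  define b where "b = a(Suc m := y, Suc (Suc m) := u')"
  have b1: "\<And>i. i \<le> m \<Longrightarrow> b i = a i" unfolding b_def by auto
  have b2: "b (Suc m) = y" "b (Suc (Suc m)) = u'" unfolding b_def by auto
  show ?thesis unfolding pathP_def
  proof (rule exI[of _ b], rule exI[of _ "Suc (Suc m)"], intro conjI allI impI)
    show "b 0 = s" using b1 a by auto
    show "b (Suc (Suc m)) = u'" using b2 by auto
    fix i
    { assume "i \<le> Suc (Suc m)"
      then consider "i \<le> m" | "i = Suc m" | "i = Suc (Suc m)" by linarith
      then show "b i \<in> sup_set W R rt" using b1 b2 a y u' by cases auto }
    { assume "i < Suc (Suc m)"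
      then consider "i < m" | "i = m" | "i = Suc m" by linarith
      then show "less_in R (b i) (b (Suc i)) \<or> less_in R (b (Suc i)) (b i)"
      proof cases
        case 1 then show ?thesis using b1 a(4) by auto
      next
        case 2 then show ?thesis using b1 b2 a(2) lu by auto
      next
        case 3 then show ?thesis using b2 lu by auto
      qed }
    { assume "i \<le> Suc (Suc m)" "even i"
      then consider "i \<le> m" | "i = Suc (Suc m)" using em by (cases "i = Suc m"; cases "i = Suc (Suc m)") auto
      then show "sup_set W R (b i) = {}" using b1 b2 a(5) \<open>even i\<close> top_sup_empty[OF u't] by cases auto }
    { assume "i \<le> Suc (Suc m)" "odd i"
      then consider "i < m" | "i = Suc m" using em by (cases "i = m"; cases "i = Suc (Suc m)"; cases "i < m") auto
      then show "sup_set W R (b i) = {b (i - 1), b (i + 1)}"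
      proof cases
        case 1 then show ?thesis using b1 a(6) \<open>odd i\<close> by auto
      next
        case 2 then show ?thesis using b1 b2 a(2) sy by auto
      qed }
  qed
qed

lemma card_up_less:
  assumes fin: "finite W" and po: "poset W R" and yW: "y \<in> W" and z: "z \<in> sup_set W R y"
  shows "card (up_set W R z) < card (up_set W R y)"
proof -
  have zW: "z \<in> W" "R y z" "y \<noteq> z" using z unfolding sup_set_def less_in_def by auto
  have "up_set W R z \<subseteq> up_set W R y" using zW yW po_trans[OF po] unfolding up_set_def by blast
  moreover have "y \<notin> up_set W R z" using zW yW po_anti[OF po] unfolding up_set_def by blast
  moreover have "y \<in> up_set W R y" using yW po_refl[OF po] unfolding up_set_def by blast
  ultimately have "up_set W R z \<subset> up_set W R y" by blast
  then show ?thesis using fin by (intro psubset_card_mono) (auto simp: up_set_def)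
qed

theorem lemma7p4:
  fixes W :: "'a set" and R :: "'a \<Rightarrow> 'a \<Rightarrow> bool" and bot s t :: 'a and n :: nat
  assumes "finite W" and "poset W R" and "rooted_at W R bot"
    and "height W R > 1"
    and "validates_PL n W R"
    and "is_top W R s" and "is_top W R t"
  shows "\<exists>(a :: nat \<Rightarrow> 'a) m. a 0 = s \<and> a m = t
      \<and> (\<forall>i\<le>m. a i \<in> sup_set W R bot)
      \<and> (\<forall>i<m. less_in R (a i) (a (Suc i)) \<or> less_in R (a (Suc i)) (a i))
      \<and> (\<forall>i\<le>m. even i \<longrightarrow> sup_set W R (a i) = {})
      \<and> (\<forall>i\<le>m. odd i \<longrightarrow> sup_set W R (a i) = {a (i - 1), a (i + 1)})"
proof -
  note fin = assms(1) and po = assms(2)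
  have botW: "bot \<in> W" and rb: "\<And>x. x \<in> W \<Longrightarrow> R bot x" using assms(3) unfolding rooted_at_def by auto
  obtain C where C: "is_chain W R C" "finite C" "card C \<ge> 3" using height_gt1[OF assms(4)] by blast
  have nofork: "\<not> has_up_reduction W R fork3_W fork3_R"
    and noscott: "\<not> has_up_reduction W R scott_W scott_R"
    using assms(5) unfolding validates_PL_def by auto
  have Wcases: "\<And>x. x \<in> W \<Longrightarrow> x = bot \<or> x \<in> sup_set W R bot"
    using rb unfolding sup_set_def less_in_def by auto
  have bnt: "\<not> is_top W R bot"
  proof
    assume "is_top W R bot"
    then have "W \<subseteq> {bot}" using rb unfolding is_top_def by auto
    then have "C \<subseteq> {bot}" using C(1) unfolding is_chain_def by auto
    then have "card C \<le> 1" using card_mono[of "{bot}" C] by auto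
    then show False using C(3) by auto
  qed
  have topin: "\<And>x. is_top W R x \<Longrightarrow> x \<in> sup_set W R bot"
  proof -
    fix x assume xt: "is_top W R x"
    then have "x \<in> W" "x \<noteq> bot" using bnt unfolding is_top_def by auto
    then show "x \<in> sup_set W R bot" using Wcases by auto
  qed
  have ps: "pathP W R bot s s" using path_base[OF assms(6) topin[OF assms(6)]] .
  have "pathP W R bot s t"
  proof (rule ccontr)
    assume npt: "\<not> pathP W R bot s t"
    define A where "A = {u. is_top W R u \<and> pathP W R bot s u}"
    define mixed where "mixed w \<longleftrightarrow> w \<in> W \<and> (\<exists>a. a \<in> A \<and> R w a) \<and> (\<exists>b. is_top W R b \<and> b \<notin> A \<and> R w b)" for w
    have sA: "s \<in> A" using ps assms(6) unfolding A_def by auto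
    have tA: "t \<notin> A" using npt unfolding A_def by auto
    have "s \<in> W" "t \<in> W" using assms(6,7) unfolding is_top_def by auto
    then have "mixed bot" unfolding mixed_def using sA tA assms(7) botW rb by blast
    then obtain y where my: "mixed y" and ymin: "\<And>y'. mixed y' \<Longrightarrow> card (up_set W R y) \<le> card (up_set W R y')"
      using ex_has_least_nat[of mixed bot "\<lambda>z. card (up_set W R z)"] by blast
    have yW: "y \<in> W" using my unfolding mixed_def by auto
    obtain a b where a: "a \<in> A" "R y a" and b: "is_top W R b" "b \<notin> A" "R y b"
      using my unfolding mixed_def by blast
    have at: "is_top W R a" using a unfolding A_def by auto
    have ab: "a \<noteq> b" using a b by auto
    have ya: "y \<noteq> a" using at b ab unfolding is_top_def by auto
    have yb: "y \<noteq> b" using b at ab a unfolding is_top_def by auto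
    have aW: "a \<in> W" "b \<in> W" using at b unfolding is_top_def by auto
    have as: "a \<in> sup_set W R y" "b \<in> sup_set W R y" using aW a b ya yb unfolding sup_set_def less_in_def by auto
    have nmix: "\<And>w. w \<in> sup_set W R y \<Longrightarrow> \<not> mixed w"
      using ymin card_up_less[OF fin po yW] by fastforce
    have supcl: "\<And>w w'. w \<in> sup_set W R y \<Longrightarrow> w' \<in> W \<Longrightarrow> R w w' \<Longrightarrow> w' \<in> sup_set W R y"
    proof -
      fix w w' assume w: "w \<in> sup_set W R y" "w' \<in> W" "R w w'"
      have "w \<in> W" "R y w" "y \<noteq> w" using w unfolding sup_set_def less_in_def by auto
      moreover have "R y w'" using po_trans[OF po yW \<open>w \<in> W\<close> w(2)] w \<open>R y w\<close> by auto
      moreover have "w' \<noteq> y" using po_anti[OF po yW \<open>w \<in> W\<close>] w \<open>R y w\<close> \<open>y \<noteq> w\<close> by auto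
      ultimately show "w' \<in> sup_set W R y" using w unfolding sup_set_def less_in_def by auto
    qed
    show False
    proof (cases "\<exists>z\<in>sup_set W R y. \<not> is_top W R z")
      case True
      then obtain z where z: "z \<in> sup_set W R y" "\<not> is_top W R z" by blast
      define X where "X = {w \<in> sup_set W R y. \<forall>u. is_top W R u \<and> R w u \<longrightarrow> u \<in> A}"
      define Y where "Y = sup_set W R y - X"
      have XY: "X \<union> Y = sup_set W R y" "X \<inter> Y = {}" unfolding X_def Y_def by auto
      have cX: "\<forall>w\<in>X. \<forall>w'\<in>W. R w w' \<longrightarrow> w' \<in> X"
      proof (intro ballI impI)
        fix w w' assume w: "w \<in> X" "w' \<in> W" "R w w'"
        have "w \<in> W" using w unfolding X_def sup_set_def by auto
        have "\<forall>u. is_top W R u \<and> R w' u \<longrightarrow> u \<in> A"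
          using w po_trans[OF po \<open>w \<in> W\<close> w(2)] unfolding X_def is_top_def by blast
        then show "w' \<in> X" using supcl w unfolding X_def by auto
      qed
      have cY: "\<forall>w\<in>Y. \<forall>w'\<in>W. R w w' \<longrightarrow> w' \<in> Y"
      proof (intro ballI impI)
        fix w w' assume w: "w \<in> Y" "w' \<in> W" "R w w'"
        have ws: "w \<in> sup_set W R y" using w unfolding Y_def by auto
        have "w \<in> W" using w unfolding Y_def sup_set_def by auto
        have noA: "\<not> (\<exists>a. a \<in> A \<and> R w a)"
          using nmix[OF ws] w ws \<open>w \<in> W\<close> unfolding mixed_def Y_def X_def by blast
        obtain u where u: "is_top W R u" "R w' u" using top_above[OF fin po w(2)] by blast
        have "u \<in> W" using u unfolding is_top_def by auto
        have "R w u" using po_trans[OF po \<open>w \<in> W\<close> w(2) \<open>u \<in> W\<close>] w u by auto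
        then have "u \<notin> A" using noA by auto
        then have "w' \<notin> X" using u unfolding X_def by auto
        then show "w' \<in> Y" using supcl[OF ws w(2,3)] unfolding Y_def by auto
      qed
      have tcl: "\<forall>w\<in>Z. \<exists>t\<in>Z. is_top W R t \<and> R w t" if ZZ: "Z \<subseteq> W" "\<forall>w\<in>Z. \<forall>w'\<in>W. R w w' \<longrightarrow> w' \<in> Z" for Z
      proof
        fix w assume "w \<in> Z"
        then obtain u where u: "is_top W R u" "R w u" using top_above[OF fin po] ZZ by blast
        then have "u \<in> Z" using ZZ \<open>w \<in> Z\<close> unfolding is_top_def by auto
        then show "\<exists>t\<in>Z. is_top W R t \<and> R w t" using u by blast
      qed
      have XW: "X \<subseteq> W" "Y \<subseteq> W" using XY unfolding sup_set_def by auto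
      have aX: "a \<in> X" using as(1) at a(1) unfolding X_def is_top_def by auto
      have bY: "b \<in> Y" using as(2) b aW po_refl[OF po] unfolding X_def Y_def by auto
      show False
      proof (cases "z \<in> X")
        case True
        have "has_up_reduction W R scott_W scott_R"
          using scott_red[OF po yW XY cX cY tcl[OF XW(1) cX] True z(2)] bY by blast
        then show False using noscott by simp
      next
        case False
        then have zY: "z \<in> Y" using z XY by auto
        have XY': "Y \<union> X = sup_set W R y" "Y \<inter> X = {}" using XY by auto
        have "has_up_reduction W R scott_W scott_R"
          using scott_red[OF po yW XY' cY cX tcl[OF XW(2) cY] zY z(2)] aX by blast
        then show False using noscott by simp
      qed
    next
      case False
      then have tops: "\<forall>w\<in>sup_set W R y. is_top W R w" by blast
      show False
      proof (cases "\<exists>c\<in>sup_set W R y. c \<noteq> a \<and> c \<noteq> b")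
        case True
        then obtain c where "c \<in> sup_set W R y" "c \<noteq> a" "c \<noteq> b" by blast
        then have "has_up_reduction W R fork3_W fork3_R"
          using fork_red[OF po yW tops as] ab by metis
        then show False using nofork by simp
      next
        case False
        then have sy: "sup_set W R y = {a, b}" using as by auto
        have ynb: "y \<noteq> bot"
        proof
          assume "y = bot"
          then have "W \<subseteq> {bot, a, b}" using Wcases sy by auto
          then have Csub: "C \<subseteq> {bot, a, b}" using C(1) unfolding is_chain_def by auto
          have "card {bot, a, b} \<le> 3" by (simp add: card_insert_le_m1)
          then have "C = {bot, a, b}" using card_subset_eq[OF _ Csub] C(3) card_mono[OF _ Csub] by fastforce
          then have "R a b \<or> R b a" using C(1) unfolding is_chain_def by auto
          then show False using at b ab aW unfolding is_top_def by auto
        qed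
        have "y \<in> sup_set W R bot" using Wcases yW ynb by auto
        then have "pathP W R bot s b"
          using path_ext[of W R bot s a b y] a(1) at b(1) topin[OF b(1)] sy unfolding A_def by auto
        then show False using b unfolding A_def by auto
      qed
    qed
  qed
  then show ?thesis unfolding pathP_def .
qed

end
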